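(* Let $M$ be a fixed positive integer and let $A\in[0,1]$ be a random variable. Suppose there is a constant $\delta\ge0$ such that $\mathbb P(A\le\alpha)\le\alpha+\delta$ for every $\alpha\in(0,1)$. Let $B$ be a random variable such that, conditional on $A$, $B\sim\mathrm{Binom}(M,A)$, and let $R=\frac{1+B}{1+M}$. Then $\mathbb P(R\le\alpha)\le\alpha+\delta$ for every $\alpha\in(0,1)$. *)

theory Defs
  imports "HOL-Probability.Probability"
begin

end

theory Submission
  imports Defs
begin

definition Fb :: "nat \<Rightarrow> nat \<Rightarrow> real \<Rightarrow> real" where
  "Fb n k p = (\<Sum>j\<le>k. real (Suc n choose j) * p^j * (1-p)^(Suc n - j))"
definition gb :: "nat \<Rightarrow> nat \<Rightarrow> real \<Rightarrow> real" where
  "gb n k p = real (Suc n) * real (n choose k) * p^k * (1-p)^(n-k)"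

lemma Fb_deriv: "k \<le> n \<Longrightarrow> (Fb n k has_real_derivative - gb n k p) (at p)"
proof (induction k)
  case 0
  have "((\<lambda>p. (1-p)^(Suc n)) has_real_derivative - gb n 0 p) (at p)"
    by (rule derivative_eq_intros refl | simp)+ (cases n, simp_all add: gb_def algebra_simps)
  then show ?case by (simp add: Fb_def[abs_def])
next
  case (Suc k)
  then obtain m where m: "n - k = Suc m" by (metis Suc_diff_Suc Suc_le_lessD)
  have nk: "n - Suc k = m" using m by simp
  have e1: "real (Suc n choose Suc k) * real (Suc k) = real (Suc n) * real (n choose k)"
    using Suc_times_binomial_eq[of n k] by (metis of_nat_mult)
  have e2: "real (Suc n choose Suc k) * real (Suc m) = real (Suc n) * real (n choose Suc k)"
  proof -
    have "(Suc n - Suc k) * (Suc n choose Suc k) = Suc n * (n choose Suc k)"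
      using binomial_absorb_comp[of "Suc n" "Suc k"] by simp
    then show ?thesis using m by (metis diff_Suc_Suc mult.commute of_nat_mult)
  qed
  have F: "Fb n (Suc k) = (\<lambda>p. Fb n k p + real (Suc n choose Suc k) * p^(Suc k) * (1-p)^(Suc m))"
    using m by (auto simp: Fb_def fun_eq_iff)
  define c where "c = real (Suc n choose Suc k)"
  have d1: "((\<lambda>p. p^(Suc k)) has_real_derivative real (Suc k) * p^k) (at p)"
    using DERIV_pow[of "Suc k" p] by simp
  have d2: "((\<lambda>p. (1-p)^(Suc m)) has_real_derivative -(real (Suc m) * (1-p)^m)) (at p)"
    by (rule derivative_eq_intros refl | simp)+
  have D: "((\<lambda>p. Fb n k p + c * (p^(Suc k) * (1-p)^(Suc m))) has_real_derivative
     - gb n k p + c * (real (Suc k) * p^k * (1-p)^(Suc m) + -(real (Suc m) * (1-p)^m) * p^(Suc k))) (at p)"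
    using Suc by (intro DERIV_add DERIV_cmult DERIV_mult d1 d2) auto
  have E: "- gb n k p + c * (real (Suc k) * p^k * (1-p)^(Suc m) + -(real (Suc m) * (1-p)^m) * p^(Suc k)) = - gb n (Suc k) p"
  proof -
    have "c * (real (Suc k) * p^k * (1-p)^(Suc m)) = (c * real (Suc k)) * (p^k * (1-p)^(Suc m))"
      by (simp only: mult.assoc mult.left_commute)
    also have "\<dots> = gb n k p"
      unfolding c_def e1 gb_def m by (simp only: mult.assoc)
    finally have "c * (real (Suc k) * p^k * (1-p)^(Suc m)) = gb n k p" .
    moreover have "c * ((real (Suc m) * (1-p)^m) * p^(Suc k)) = gb n (Suc k) p"
      unfolding gb_def nk c_def using e2 by (simp del: binomial_Suc_Suc of_nat_Suc add: algebra_simps)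
    ultimately show ?thesis by (simp add: algebra_simps)
  qed
  have G: "Fb n (Suc k) = (\<lambda>p. Fb n k p + c * (p^(Suc k) * (1-p)^(Suc m)))"
    using F by (simp add: c_def mult.assoc)
  show ?case unfolding G E[symmetric] by (rule D)
qed

lemma Fb_1: "k \<le> n \<Longrightarrow> Fb n k 1 = 0"
  unfolding Fb_def by (intro sum.neutral) auto

lemma Fb_0: "Fb n k 0 = 1"
  unfolding Fb_def by (simp add: sum.atMost_shift)

lemma gb_int: assumes "k \<le> n" shows "(gb n k has_integral 1) {0..1}"
proof -
  have "((\<lambda>p. - Fb n k p) has_vector_derivative gb n k x) (at x within {0..1})" for x
    using has_field_derivative_at_within[OF DERIV_minus[OF Fb_deriv[OF assms, of x]]]
    by (simp add: has_real_derivative_iff_has_vector_derivative)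
  from fundamental_theorem_of_calculus[OF _ this]
  show ?thesis using Fb_0 Fb_1[OF assms] by simp
qed

lemma gb_int_a: assumes "k \<le> n" "a \<le> 1" shows "(gb n k has_integral Fb n k a) {a..1}"
proof -
  have "((\<lambda>p. - Fb n k p) has_vector_derivative gb n k x) (at x within {a..1})" for x
    using has_field_derivative_at_within[OF DERIV_minus[OF Fb_deriv[OF assms(1), of x]]]
    by (simp add: has_real_derivative_iff_has_vector_derivative)
  from fundamental_theorem_of_calculus[OF assms(2) this]
  show ?thesis using Fb_1[OF assms(1)] by simp
qed

lemma gb_int_p: assumes "k \<le> n" shows "((\<lambda>p. p * gb n k p) has_integral (real k + 1) / (real n + 2)) {0..1}"
proof -
  have e1: "real (Suc n choose Suc k) * real (Suc k) = real (Suc n) * real (n choose k)"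
    using Suc_times_binomial_eq[of n k] by (metis of_nat_mult)
  have pos: "real (Suc n choose Suc k) > 0" using assms by (simp del: binomial_Suc_Suc)
  have "p * gb n k p = (real k + 1) / (real n + 2) * gb (Suc n) (Suc k) p" for p
  proof -
    have "p * gb n k p = (real (Suc n) * real (n choose k)) * (p^Suc k * (1-p)^(n-k))"
      unfolding gb_def by (simp del: binomial_Suc_Suc of_nat_Suc add: mult_ac)
    also have "\<dots> = (real (Suc n choose Suc k) * real (Suc k)) * (p^Suc k * (1-p)^(n-k))"
      by (simp only: e1)
    also have "\<dots> = (real k + 1) / (real n + 2) * gb (Suc n) (Suc k) p"
      unfolding gb_def by (simp del: binomial_Suc_Suc add: field_simps)
    finally show ?thesis .
  qed
  moreover have "((\<lambda>p. (real k + 1) / (real n + 2) * gb (Suc n) (Suc k) p) has_integral (real k + 1) / (real n + 2) * 1) {0..1}"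
    by (intro has_integral_mult_right gb_int) (use assms in simp)
  ultimately show ?thesis by simp
qed

lemma gb_nonneg: "p \<in> {0..1} \<Longrightarrow> gb n k p \<ge> 0"
  unfolding gb_def by auto

lemma Fb_nonneg: "p \<in> {0..1} \<Longrightarrow> Fb n k p \<ge> 0"
  unfolding Fb_def by (auto intro!: sum_nonneg)

lemma gb_meas[measurable]: "gb n k \<in> borel_measurable borel"
  unfolding gb_def[abs_def] by measurable

lemma main_bound:
  fixes P :: "'a measure" and A :: "'a \<Rightarrow> real" and B :: "'a \<Rightarrow> nat"
    and N k :: nat and \<delta> :: real
  assumes "prob_space P"
    and "\<delta> \<ge> 0" and "k \<le> N"
    and A_rv[measurable]: "A \<in> borel_measurable P"
    and B_rv[measurable]: "B \<in> measurable P (count_space UNIV)"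
    and A_range: "\<And>\<omega>. \<omega> \<in> space P \<Longrightarrow> A \<omega> \<in> {0..1}"
    and A_hyp: "\<And>\<alpha>. \<alpha> \<in> {0<..<1} \<Longrightarrow> measure P {\<omega> \<in> space P. A \<omega> \<le> \<alpha>} \<le> \<alpha> + \<delta>"
    and B_cond: "\<And>S k. S \<in> sets borel \<Longrightarrow>
        measure P {\<omega> \<in> space P. A \<omega> \<in> S \<and> B \<omega> = k}
          = (\<integral>\<omega>. indicator S (A \<omega>) * pmf (binomial_pmf (Suc N) (A \<omega>)) k \<partial>P)"
  shows "measure P {\<omega> \<in> space P. B \<omega> \<le> k} \<le> (real k + 1) / (real N + 2) + \<delta>"
proof -
  interpret prob_space P by fact
  define bt where "bt j a = real (Suc N choose j) * a^j * (1-a)^(Suc N - j)" for j a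
  have bt_meas[measurable]: "bt j \<in> borel_measurable borel" for j
    unfolding bt_def[abs_def] by measurable
  have Fb_bt: "Fb N k a = (\<Sum>j\<le>k. bt j a)" for a
    unfolding Fb_def bt_def by simp
  have int_bt: "integrable P (\<lambda>\<omega>. bt j (A \<omega>))" for j
  proof (rule integrable_const_bound[where B=1])
    show "AE x in P. norm (bt j (A x)) \<le> 1"
    proof (rule AE_I2)
      fix x assume x: "x \<in> space P"
      then have a: "0 \<le> A x" "A x \<le> 1" using A_range by auto
      have "bt j (A x) = pmf (binomial_pmf (Suc N) (A x)) j"
        unfolding bt_def using pmf_binomial[OF a] by simp
      then show "norm (bt j (A x)) \<le> 1" by (simp add: pmf_le_1)
    qed
  qed measurable
  have mB: "measure P {\<omega> \<in> space P. B \<omega> = j} = (\<integral>\<omega>. bt j (A \<omega>) \<partial>P)" for j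
  proof -
    have "measure P {\<omega> \<in> space P. B \<omega> = j} = measure P {\<omega> \<in> space P. A \<omega> \<in> UNIV \<and> B \<omega> = j}"
      by simp
    also have "\<dots> = (\<integral>\<omega>. indicator UNIV (A \<omega>) * pmf (binomial_pmf (Suc N) (A \<omega>)) j \<partial>P)"
      by (rule B_cond) simp
    also have "\<dots> = (\<integral>\<omega>. bt j (A \<omega>) \<partial>P)"
    proof (rule Bochner_Integration.integral_cong[OF refl])
      fix x assume x: "x \<in> space P"
      then have a: "0 \<le> A x" "A x \<le> 1" using A_range by auto
      show "indicator UNIV (A x) * pmf (binomial_pmf (Suc N) (A x)) j = bt j (A x)"
        unfolding bt_def using pmf_binomial[OF a] by simp
    qed
    finally show ?thesis .
  qed
  have "measure P {\<omega> \<in> space P. B \<omega> \<le> k} = measure P (\<Union>j\<in>{..k}. {\<omega> \<in> space P. B \<omega> = j})"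
    by (rule arg_cong[where f="measure P"]) auto
  also have "\<dots> = (\<Sum>j\<le>k. measure P {\<omega> \<in> space P. B \<omega> = j})"
    by (rule finite_measure_finite_Union) (auto simp: disjoint_family_on_def)
  also have "\<dots> = (\<Sum>j\<le>k. \<integral>\<omega>. bt j (A \<omega>) \<partial>P)"
    using mB by simp
  also have "\<dots> = (\<integral>\<omega>. Fb N k (A \<omega>) \<partial>P)"
    unfolding Fb_bt by (rule Bochner_Integration.integral_sum[symmetric]) (use int_bt in auto)
  finally have m_eq: "measure P {\<omega> \<in> space P. B \<omega> \<le> k} = (\<integral>\<omega>. Fb N k (A \<omega>) \<partial>P)" .
  have int_F: "integrable P (\<lambda>\<omega>. Fb N k (A \<omega>))"
    unfolding Fb_bt by (rule Bochner_Integration.integrable_sum) (use int_bt in auto)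
  define f where "f \<omega> p = ennreal (if A \<omega> \<le> p \<and> p \<le> 1 then gb N k p else 0)" for \<omega> p
  have f_meas: "case_prod f \<in> borel_measurable (P \<Otimes>\<^sub>M lborel)"
    unfolding f_def[abs_def] by measurable
  have inner: "ennreal (Fb N k (A \<omega>)) = (\<integral>\<^sup>+p. f \<omega> p \<partial>lborel)" if \<omega>: "\<omega> \<in> space P" for \<omega>
  proof -
    define a where "a = A \<omega>"
    have a: "0 \<le> a" "a \<le> 1" using A_range[OF \<omega>] by (auto simp: a_def)
    have "((\<lambda>p. if p \<in> {a..1} then gb N k p else 0) has_integral Fb N k a) UNIV"
      using gb_int_a[OF assms(3) a(2)] by (simp only: has_integral_restrict_UNIV)
    then have "(\<integral>\<^sup>+p. ennreal (if p \<in> {a..1} then gb N k p else 0) \<partial>lborel) = ennreal (Fb N k a)"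
      using a by (intro nn_integral_has_integral_lborel) (auto intro!: gb_nonneg)
    then show ?thesis unfolding f_def a_def by simp
  qed
  have bound: "AE p in lborel. (\<integral>\<^sup>+\<omega>. f \<omega> p \<partial>P) \<le> ennreal (if p \<in> {0..1} then p * gb N k p + \<delta> * gb N k p else 0)"
    using AE_lborel_singleton[of 0] AE_lborel_singleton[of 1]
  proof eventually_elim
    case (elim p)
    show ?case
    proof (cases "0 < p \<and> p < 1")
      case True
      have "(\<integral>\<^sup>+\<omega>. f \<omega> p \<partial>P) = (\<integral>\<^sup>+\<omega>. ennreal (gb N k p) * indicator {\<omega> \<in> space P. A \<omega> \<le> p} \<omega> \<partial>P)"
        using True by (intro nn_integral_cong) (auto simp: f_def indicator_def)
      also have "\<dots> = ennreal (gb N k p) * emeasure P {\<omega> \<in> space P. A \<omega> \<le> p}"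
        by (rule nn_integral_cmult_indicator) measurable
      also have "\<dots> = ennreal (gb N k p) * ennreal (measure P {\<omega> \<in> space P. A \<omega> \<le> p})"
        by (simp add: emeasure_eq_measure)
      also have "\<dots> \<le> ennreal (gb N k p) * ennreal (p + \<delta>)"
        using A_hyp[of p] True by (intro mult_left_mono ennreal_leI) auto
      also have "\<dots> = ennreal (if p \<in> {0..1} then p * gb N k p + \<delta> * gb N k p else 0)"
        using True gb_nonneg[of p N k] assms(2)
        by (simp add: ennreal_mult[symmetric] algebra_simps)
      finally show ?thesis .
    next
      case False
      with elim have "p < 0 \<or> p > 1" by auto
      then have "(\<integral>\<^sup>+\<omega>. f \<omega> p \<partial>P) = (\<integral>\<^sup>+\<omega>. 0 \<partial>P)"
        by (intro nn_integral_cong) (auto simp: f_def dest!: A_range)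
      then show ?thesis by simp
    qed
  qed
  have val: "(\<integral>\<^sup>+p. ennreal (if p \<in> {0..1} then p * gb N k p + \<delta> * gb N k p else 0) \<partial>lborel)
      = ennreal ((real k + 1) / (real N + 2) + \<delta>)"
  proof -
    have "((\<lambda>p. p * gb N k p + \<delta> * gb N k p) has_integral (real k + 1) / (real N + 2) + \<delta> * 1) {0..1}"
      by (intro has_integral_add has_integral_mult_right gb_int_p gb_int assms(3))
    then have "((\<lambda>p. if p \<in> {0..1} then p * gb N k p + \<delta> * gb N k p else 0) has_integral (real k + 1) / (real N + 2) + \<delta>) UNIV"
      by (simp only: has_integral_restrict_UNIV mult_1_right)
    then show ?thesis
      by (intro nn_integral_has_integral_lborel) (use assms(2) in \<open>auto intro!: gb_nonneg add_nonneg_nonneg mult_nonneg_nonneg\<close>)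
  qed
  interpret pf: pair_sigma_finite P lborel
    by (simp add: pair_sigma_finite_def lborel.sigma_finite_measure_axioms prob_space_imp_sigma_finite \<open>prob_space P\<close>)
  have "ennreal (measure P {\<omega> \<in> space P. B \<omega> \<le> k}) = (\<integral>\<^sup>+\<omega>. ennreal (Fb N k (A \<omega>)) \<partial>P)"
    unfolding m_eq
    by (rule nn_integral_eq_integral[symmetric, OF int_F]) (auto intro!: Fb_nonneg A_range)
  also have "\<dots> = (\<integral>\<^sup>+\<omega>. (\<integral>\<^sup>+p. f \<omega> p \<partial>lborel) \<partial>P)"
    by (rule nn_integral_cong) (simp add: inner)
  also have "\<dots> = (\<integral>\<^sup>+p. (\<integral>\<^sup>+\<omega>. f \<omega> p \<partial>P) \<partial>lborel)"
    by (rule pf.Fubini'[symmetric, OF f_meas])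
  also have "\<dots> \<le> ennreal ((real k + 1) / (real N + 2) + \<delta>)"
    unfolding val[symmetric] by (rule nn_integral_mono_AE[OF bound])
  finally show ?thesis
    using assms(2) by (subst (asm) ennreal_le_iff) auto
qed


theorem lemmaA1:
  fixes P :: "'a measure" and A :: "'a \<Rightarrow> real" and B :: "'a \<Rightarrow> nat"
    and M :: nat and \<delta> :: real
  assumes "prob_space P"
    and "M > 0"
    and "\<delta> \<ge> 0"
    and A_rv: "A \<in> borel_measurable P"
    and B_rv: "B \<in> measurable P (count_space UNIV)"
    and A_range: "\<And>\<omega>. \<omega> \<in> space P \<Longrightarrow> A \<omega> \<in> {0..1}"
    and A_hyp: "\<And>\<alpha>. \<alpha> \<in> {0<..<1} \<Longrightarrow> measure P {\<omega> \<in> space P. A \<omega> \<le> \<alpha>} \<le> \<alpha> + \<delta>"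
    and B_cond: "\<And>S k. S \<in> sets borel \<Longrightarrow>
        measure P {\<omega> \<in> space P. A \<omega> \<in> S \<and> B \<omega> = k}
          = (\<integral>\<omega>. indicator S (A \<omega>) * pmf (binomial_pmf M (A \<omega>)) k \<partial>P)"
  shows "\<forall>\<alpha> \<in> {0<..<1}.
           measure P {\<omega> \<in> space P. (1 + real (B \<omega>)) / (1 + real M) \<le> \<alpha>} \<le> \<alpha> + \<delta>"
proof
  fix \<alpha> :: real assume \<alpha>: "\<alpha> \<in> {0<..<1}"
  obtain N where N: "M = Suc N" using \<open>M > 0\<close> gr0_implies_Suc by blast
  define L where "L = \<lfloor>\<alpha> * (1 + real M)\<rfloor>"
  have pos: "0 < 1 + real M" by simp
  have iff: "(1 + real b) / (1 + real M) \<le> \<alpha> \<longleftrightarrow> int b + 1 \<le> L" for b :: nat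
  proof -
    have "(1 + real b) / (1 + real M) \<le> \<alpha> \<longleftrightarrow> 1 + real b \<le> \<alpha> * (1 + real M)"
      using pos by (simp add: pos_divide_le_eq)
    also have "\<dots> \<longleftrightarrow> int b + 1 \<le> L"
      unfolding L_def by (simp add: le_floor_iff add.commute)
    finally show ?thesis .
  qed
  show "measure P {\<omega> \<in> space P. (1 + real (B \<omega>)) / (1 + real M) \<le> \<alpha>} \<le> \<alpha> + \<delta>"
  proof (cases "L \<ge> 1")
    case False
    then have "{\<omega> \<in> space P. (1 + real (B \<omega>)) / (1 + real M) \<le> \<alpha>} = {}"
      using iff by auto
    then have "measure P {\<omega> \<in> space P. (1 + real (B \<omega>)) / (1 + real M) \<le> \<alpha>} = 0" by (simp only: measure_empty)
    then show ?thesis using \<alpha> \<open>\<delta> \<ge> 0\<close> by simp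
  next
    case True
    define k where "k = nat (L - 1)"
    have kL: "int k + 1 = L" using True by (simp add: k_def)
    have LM: "L \<le> int M"
    proof -
      have "\<alpha> * (1 + real M) < 1 + real M" using \<alpha> pos by simp
      then have "L < 1 + int M" unfolding L_def by (simp add: floor_less_iff)
      then show ?thesis by simp
    qed
    have kN: "k \<le> N" using kL LM N by simp
    have Lle: "real_of_int L \<le> \<alpha> * (1 + real M)" unfolding L_def by simp
    have set_eq: "{\<omega> \<in> space P. (1 + real (B \<omega>)) / (1 + real M) \<le> \<alpha>} = {\<omega> \<in> space P. B \<omega> \<le> k}"
    proof -
      have "(1 + real b) / (1 + real M) \<le> \<alpha> \<longleftrightarrow> b \<le> k" for b
        unfolding iff kL[symmetric] by simp
      then show ?thesis by (simp only:)
    qed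
    have BcN: "\<And>S k. S \<in> sets borel \<Longrightarrow>
        measure P {\<omega> \<in> space P. A \<omega> \<in> S \<and> B \<omega> = k}
          = (\<integral>\<omega>. indicator S (A \<omega>) * pmf (binomial_pmf (Suc N) (A \<omega>)) k \<partial>P)"
      using B_cond unfolding N .
    have "measure P {\<omega> \<in> space P. B \<omega> \<le> k} \<le> (real k + 1) / (real N + 2) + \<delta>"
      by (rule main_bound[OF assms(1) assms(3) kN A_rv B_rv A_range A_hyp BcN])
    also have "(real k + 1) / (real N + 2) \<le> \<alpha>"
    proof -
      have h1: "real k + 1 = real_of_int L" using kL by (metis of_int_of_nat_eq of_int_1 of_int_add)
      have h2: "real N + 2 = 1 + real M" using N by simp
      show ?thesis unfolding h1 h2 using Lle pos by (simp add: pos_divide_le_eq mult.commute)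
    qed
    then have "(real k + 1) / (real N + 2) + \<delta> \<le> \<alpha> + \<delta>" by simp
    finally show ?thesis unfolding set_eq .
  qed
qed

end
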